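(* For any group $\Gamma$ we have $\eta(\Gamma)=1-1/\mathrm{Lit}(\Gamma)$.
   Context: $T_1(\Gamma)$ is the space of all $f\colon\Gamma\to\mathbf{C}$ for which there exist $f_1,f_2\colon\Gamma\times\Gamma\to\mathbf{C}$ with $f(x^{-1}y)=f_1(x,y)+f_2(x,y)$ for all $x,y$, $\sup_x\sum_y|f_1(x,y)|<\infty$, $\sup_y\sum_x|f_2(x,y)|<\infty$; $\mathrm{Lit}(\Gamma)=\inf\{p>0:T_1(\Gamma)\subseteq\ell^p(\Gamma)\}\in[0,\infty]$ (with $1/0=\infty$, $1/\infty=0$). For a finite symmetric $S\subseteq\Gamma$, $\mathrm{Cay}(\Gamma,S)$ is the (possibly disconnected) graph with vertex set $\Gamma$ and an edge between $g$ and $gs$ for each $s\in S$. For finite $F\subseteq\Gamma$, $\partial_S F$ is the set of edges joining $F$ to $\Gamma\setminus F$. The Cheeger constant is $h(\Gamma,S)=\inf_F|\partial_SF|/|F|$ over non-empty finite $F$, and $e(\Gamma,S)=1-h(\Gamma,S)/|S|$. Define $\eta(\Gamma)=-\liminf_S \frac{\ln e(\Gamma,S)}{\ln|S|}$, where the liminf is over the directed set of finite symmetric subsets ordered by inclusion, $\liminf_S f(S)=\sup_S\inf_{S'\supseteq S}f(S')$; by convention $\eta(\Gamma)=-\infty$ if $\Gamma$ is finite. *)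

theory Defs
  imports "HOL-Analysis.Analysis"
begin

text \<open>The group \<Gamma> is a type of class group_add; the group law is written additively,
  so x^{-1} y becomes (- x + y), and g s becomes g + s.\<close>

definition T1 :: "'a::group_add itself \<Rightarrow> ('a \<Rightarrow> complex) set" where
  "T1 G = {f. \<exists>f1 f2.
      (\<forall>x y. f (- x + y) = f1 x y + f2 x y) \<and>
      (\<exists>C. \<forall>x. (\<lambda>y. norm (f1 x y)) summable_on UNIV \<and> (\<Sum>\<^sub>\<infinity>y. norm (f1 x y)) \<le> C) \<and>
      (\<exists>C. \<forall>y. (\<lambda>x. norm (f2 x y)) summable_on UNIV \<and> (\<Sum>\<^sub>\<infinity>x. norm (f2 x y)) \<le> C)}"

definition lp_space :: "real \<Rightarrow> ('a \<Rightarrow> complex) set" where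
  "lp_space p = {f. (\<lambda>x. norm (f x) powr p) summable_on UNIV}"

definition Lit :: "'a::group_add itself \<Rightarrow> ereal" where
  "Lit G = Inf (ereal ` {p. p > 0 \<and> T1 G \<subseteq> lp_space p})"

definition fin_sym_subsets :: "'a::group_add itself \<Rightarrow> 'a set set" where
  "fin_sym_subsets G = {S. finite S \<and> (\<forall>s\<in>S. - s \<in> S)}"

text \<open>Edge boundary of F in Cay(\<Gamma>,S): edges (g, g+s), s \<in> S, joining F to its complement;
  edges are counted as pairs (g,s) with g \<in> F, g + s \<notin> F.\<close>
definition boundary :: "'a::group_add set \<Rightarrow> 'a set \<Rightarrow> ('a \<times> 'a) set" where
  "boundary S F = {(g, s). g \<in> F \<and> s \<in> S \<and> g + s \<notin> F}"

definition cheeger :: "'a::group_add set \<Rightarrow> real" where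
  "cheeger S = Inf {real (card (boundary S F)) / real (card F) | F. finite F \<and> F \<noteq> {}}"

definition e_const :: "'a::group_add set \<Rightarrow> real" where
  "e_const S = 1 - cheeger S / real (card S)"

definition eta :: "'a::group_add itself \<Rightarrow> ereal" where
  "eta G = (if finite (UNIV :: 'a set) then - \<infinity>
     else - (SUP S\<in>fin_sym_subsets G. INF S'\<in>{S'\<in>fin_sym_subsets G. S \<subseteq> S'}.
               ereal (ln (e_const S') / ln (real (card S')))))"

end

theory Submission
  imports Defs
begin


lemma bool_compactness:
  fixes Q :: "'z \<Rightarrow> ('i \<Rightarrow> bool) \<Rightarrow> bool" and N :: "'z \<Rightarrow> 'i set"
  assumes finN: "\<And>z. finite (N z)"
    and loc: "\<And>z w1 w2. (\<And>i. i \<in> N z \<Longrightarrow> w1 i = w2 i) \<Longrightarrow> Q z w1 \<Longrightarrow> Q z w2"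
    and fin: "\<And>Z. finite Z \<Longrightarrow> \<exists>w. \<forall>z\<in>Z. Q z w"
  shows "\<exists>w. \<forall>z. Q z w"
proof -
  define X where "X = product_topology (\<lambda>_::'i. discrete_topology (UNIV::bool set)) UNIV"
  have top: "topspace X = UNIV"
    by (auto simp: X_def PiE_def extensional_def)
  have cs: "compact_space X"
    unfolding X_def by (simp add: compact_space_product_topology compact_space_discrete_topology)
  have clo: "closedin X {w. Q z w}" for z
  proof -
    have "openin X (UNIV - {w. Q z w})"
    proof (subst openin_subopen, intro ballI)
      fix w0 assume w0: "w0 \<in> UNIV - {w. Q z w}"
      define T where "T = (\<Inter>i\<in>N z. {w. w i = w0 i})"
      have opT: "openin X (topspace X \<inter> T)"
      proof -
        have "openin X {w \<in> topspace X. w i \<in> {w0 i}}" for i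
          by (rule openin_continuous_map_preimage[where Y="discrete_topology UNIV"])
             (auto simp: X_def intro: continuous_map_product_projection)
        hence "openin X (topspace X \<inter> (\<Inter>i\<in>N z. {w \<in> topspace X. w i \<in> {w0 i}}))"
          using finN by (intro openin_Int_Inter) auto
        thus ?thesis unfolding T_def by (simp add: top)
      qed
      moreover have "w0 \<in> topspace X \<inter> T" by (simp add: top T_def)
      moreover have "topspace X \<inter> T \<subseteq> UNIV - {w. Q z w}"
        using w0 loc[of z _ w0] by (auto simp: T_def)
      ultimately show "\<exists>T. openin X T \<and> w0 \<in> T \<and> T \<subseteq> UNIV - {w. Q z w}" by blast
    qed
    thus ?thesis by (simp add: closedin_def top)
  qed
  have "\<Inter>(range (\<lambda>z. {w. Q z w})) \<noteq> {}"
  proof (rule cs[unfolded compact_space_fip, rule_format], intro conjI allI impI)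
    show "\<forall>C\<in>range (\<lambda>z. {w. Q z w}). closedin X C" using clo by auto
    fix F assume "finite F \<and> F \<subseteq> range (\<lambda>z. {w. Q z w})"
    then obtain Z where Z: "finite Z" "F = (\<lambda>z. {w. Q z w}) ` Z"
      by (meson finite_subset_image)
    then obtain w where "\<forall>z\<in>Z. Q z w" using fin by blast
    thus "\<Inter>F \<noteq> {}" using Z by auto
  qed
  thus ?thesis by auto
qed



definition degG :: "'a::group_add set \<Rightarrow> 'a set \<Rightarrow> 'a \<Rightarrow> nat" where
  "degG S G x = card {s\<in>S. x + s \<in> G}"

definition intc :: "'a::group_add set \<Rightarrow> 'a set \<Rightarrow> nat" where
  "intc S G = card {(g,s). g\<in>G \<and> s\<in>S \<and> g + s \<in> G}"

definition loadG :: "'a::group_add set \<Rightarrow> 'a set \<Rightarrow> ('a \<times> 'a \<Rightarrow> bool) \<Rightarrow> 'a \<Rightarrow> nat" where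
  "loadG S G w z = card {y\<in>G. -z+y\<in>S \<and> w (z,y)} + card {x\<in>G. -x+z\<in>S \<and> \<not> w (x,z)}"

lemma intc_sum:
  assumes "finite S" "finite G"
  shows "intc S G = (\<Sum>g\<in>G. degG S G g)"
proof -
  have "{(g,s). g\<in>G \<and> s\<in>S \<and> g + s \<in> G} = Sigma G (\<lambda>g. {s\<in>S. g+s\<in>G})" by auto
  thus ?thesis unfolding intc_def degG_def using assms by (simp add: card_SigmaI)
qed

lemma exists_low_deg:
  assumes "finite S" "finite G" "G \<noteq> {}" "real (intc S G) \<le> d * real (card G)"
  shows "\<exists>x\<in>G. real (degG S G x) \<le> d"
proof (rule ccontr)
  assume "\<not> ?thesis"
  hence "\<forall>x\<in>G. d < real (degG S G x)" by auto
  hence "(\<Sum>x\<in>G. d) < (\<Sum>x\<in>G. real (degG S G x))"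
    using assms by (intro sum_strict_mono) auto
  thus False using assms intc_sum[OF assms(1,2)] by (simp add: of_nat_sum algebra_simps)
qed

lemma card_out_nbrs:
  assumes "finite S"
  shows "card {y\<in>G. -x+y\<in>S} = degG S G x"
proof -
  have "{y\<in>G. -x+y\<in>S} = (\<lambda>s. x+s) ` {s\<in>S. x + s \<in> G}"
  proof (rule set_eqI, rule iffI)
    fix y assume "y \<in> {y\<in>G. -x+y\<in>S}"
    moreover have "y = x + (-x + y)" by (simp add: add.assoc[symmetric])
    ultimately show "y \<in> (\<lambda>s. x+s) ` {s\<in>S. x + s \<in> G}" by (intro image_eqI[of _ _ "-x+y"]) auto
  next
    fix y assume "y \<in> (\<lambda>s. x+s) ` {s\<in>S. x + s \<in> G}"
    thus "y \<in> {y\<in>G. -x+y\<in>S}" by (auto simp: add.assoc[symmetric])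
  qed
  moreover have "inj_on (\<lambda>s. x+s) {s\<in>S. x + s \<in> G}" by (auto simp: inj_on_def)
  ultimately show ?thesis unfolding degG_def by (simp add: card_image)
qed

lemma card_in_nbrs:
  assumes "finite S" and sym: "\<forall>s\<in>S. - s \<in> S"
  shows "card {a\<in>G. -a+x\<in>S} \<le> degG S G x"
  unfolding degG_def
proof (rule card_inj_on_le[where f="\<lambda>a. -x + a"])
  show "inj_on (\<lambda>a. -x + a) {a\<in>G. -a+x\<in>S}" by (auto simp: inj_on_def)
  show "(\<lambda>a. -x + a) ` {a\<in>G. -a+x\<in>S} \<subseteq> {s\<in>S. x + s \<in> G}"
  proof
    fix t assume "t \<in> (\<lambda>a. -x + a) ` {a\<in>G. -a+x\<in>S}"
    then obtain a where a: "a\<in>G" "-a+x\<in>S" "t = -x+a" by auto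
    have "-(-a+x) \<in> S" using sym a by auto
    hence "t \<in> S" using a by (simp add: minus_add)
    moreover have "x + t \<in> G" using a by (simp add: add.assoc[symmetric])
    ultimately show "t \<in> {s\<in>S. x + s \<in> G}" by simp
  qed
  show "finite {s\<in>S. x + s \<in> G}" using assms by simp
qed

lemma finite_orientation:
  assumes "finite S" and sym: "\<forall>s\<in>S. - s \<in> S"
    and dens: "\<And>G. finite G \<Longrightarrow> G \<noteq> {} \<Longrightarrow> real (intc S G) \<le> d * real (card G)"
    and "finite G"
  shows "\<exists>w. \<forall>z\<in>G. real (loadG S G w z) \<le> 2 * d"
  using \<open>finite G\<close>
proof (induction G rule: finite_psubset_induct)
  case (psubset G)
  show ?case
  proof (cases "G = {}")
    case True thus ?thesis by auto
  next
    case False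
    then obtain x where x: "x \<in> G" "real (degG S G x) \<le> d"
      using exists_low_deg[OF assms(1) psubset.hyps False dens[OF psubset.hyps False]] by blast
    have "G - {x} \<subset> G" using x by auto
    then obtain w' where w': "\<forall>z\<in>G-{x}. real (loadG S (G-{x}) w' z) \<le> 2 * d"
      using psubset.IH by blast
    define w where "w = (\<lambda>(a,b). if a = x then True else if b = x then False else w' (a,b))"
    have "real (loadG S G w z) \<le> 2 * d" if z: "z \<in> G" for z
    proof (cases "z = x")
      case True
      have "card {y\<in>G. -z+y\<in>S \<and> w (z,y)} = degG S G x"
        using True card_out_nbrs[OF assms(1)] by (simp add: w_def)
      moreover have "card {a\<in>G. -a+z\<in>S \<and> \<not> w (a,z)} \<le> card {a\<in>G. -a+x\<in>S}"
        using True psubset.hyps by (intro card_mono) auto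
      ultimately have "loadG S G w z \<le> 2 * degG S G x"
        using card_in_nbrs[OF assms(1) sym, of G x] unfolding loadG_def by linarith
      thus ?thesis using x by linarith
    next
      case False
      have "{y\<in>G. -z+y\<in>S \<and> w (z,y)} = {y\<in>G-{x}. -z+y\<in>S \<and> w' (z,y)}"
        using False by (auto simp: w_def)
      moreover have "{a\<in>G. -a+z\<in>S \<and> \<not> w (a,z)} = {a\<in>G-{x}. -a+z\<in>S \<and> \<not> w' (a,z)}"
        using False by (auto simp: w_def)
      ultimately have "loadG S G w z = loadG S (G-{x}) w' z" unfolding loadG_def by simp
      thus ?thesis using w' False z by auto
    qed
    thus ?thesis by blast
  qed
qed

definition loadU :: "'a::group_add set \<Rightarrow> ('a \<times> 'a \<Rightarrow> bool) \<Rightarrow> 'a \<Rightarrow> nat" where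
  "loadU S w z = card {y. -z+y\<in>S \<and> w (z,y)} + card {x. -x+z\<in>S \<and> \<not> w (x,z)}"

lemma finite_nbrs1: "finite S \<Longrightarrow> finite {y. -z+y\<in>(S::'a::group_add set)}"
proof -
  assume "finite S"
  have "{y. -z+y\<in>S} \<subseteq> (\<lambda>s. z+s) ` S"
  proof
    fix y assume "y \<in> {y. -z+y\<in>S}"
    moreover have "y = z + (-z + y)" by (simp add: add.assoc[symmetric])
    ultimately show "y \<in> (\<lambda>s. z+s) ` S" by (intro image_eqI[of _ _ "-z+y"]) auto
  qed
  thus ?thesis using \<open>finite S\<close> finite_subset by blast
qed

lemma finite_nbrs2: "finite S \<Longrightarrow> finite {x. -x+z\<in>(S::'a::group_add set)}"
proof -
  assume "finite S"
  have "{x. -x+z\<in>S} \<subseteq> (\<lambda>s. z + - s) ` S"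
  proof
    fix y assume "y \<in> {x. -x+z\<in>S}"
    moreover have "y = z + - (-y + z)" by (simp add: minus_add add.assoc[symmetric])
    ultimately show "y \<in> (\<lambda>s. z + - s) ` S" by (intro image_eqI[of _ _ "-y+z"]) auto
  qed
  thus ?thesis using \<open>finite S\<close> finite_subset by blast
qed

lemma global_orientation:
  assumes "finite S" and sym: "\<forall>s\<in>S. - s \<in> S"
    and dens: "\<And>G. finite G \<Longrightarrow> G \<noteq> {} \<Longrightarrow> real (intc S G) \<le> d * real (card G)"
  shows "\<exists>w. \<forall>z. real (loadU S w z) \<le> 2 * d"
proof (rule bool_compactness[where N="\<lambda>z. ((\<lambda>y. (z,y)) ` {y. -z+y\<in>S}) \<union> ((\<lambda>x. (x,z)) ` {x. -x+z\<in>S})"])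
  show "finite (((\<lambda>y. (z,y)) ` {y. -z+y\<in>S}) \<union> ((\<lambda>x. (x,z)) ` {x. -x+z\<in>S}))" for z
    using finite_nbrs1[OF assms(1)] finite_nbrs2[OF assms(1)] by auto
  show "real (loadU S w2 z) \<le> 2 * d"
    if "\<And>i. i \<in> ((\<lambda>y. (z,y)) ` {y. -z+y\<in>S}) \<union> ((\<lambda>x. (x,z)) ` {x. -x+z\<in>S}) \<Longrightarrow> w1 i = w2 i"
       "real (loadU S w1 z) \<le> 2 * d" for z w1 w2
  proof -
    have "loadU S w1 z = loadU S w2 z" unfolding loadU_def
      using that(1) by (intro arg_cong2[where f="(+)"] arg_cong[where f=card]) auto
    thus ?thesis using that(2) by simp
  qed
  show "\<exists>w. \<forall>z\<in>Z. real (loadU S w z) \<le> 2 * d" if "finite Z" for Z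
  proof -
    obtain w where w: "\<forall>z\<in>Z. real (loadG S Z w z) \<le> 2 * d"
      using finite_orientation[OF assms(1) sym dens \<open>finite Z\<close>] by blast
    define v where "v = (\<lambda>(a,b). if a \<in> Z \<and> b \<in> Z then w (a,b) else a \<notin> Z)"
    have "loadU S v z = loadG S Z w z" if "z \<in> Z" for z
    proof -
      have "{y. -z+y\<in>S \<and> v (z,y)} = {y\<in>Z. -z+y\<in>S \<and> w (z,y)}" using that by (auto simp: v_def)
      moreover have "{x. -x+z\<in>S \<and> \<not> v (x,z)} = {x\<in>Z. -x+z\<in>S \<and> \<not> w (x,z)}" using that by (auto simp: v_def)
      ultimately show ?thesis unfolding loadU_def loadG_def by simp
    qed
    hence "\<forall>z\<in>Z. real (loadU S v z) \<le> 2 * d" using w by auto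
    thus ?thesis by blast
  qed
qed



lemma cheeger_set_ne: "{real (card (boundary S F)) / real (card F) | F. finite F \<and> F \<noteq> {}} \<noteq> {}"
  by (auto intro!: exI[of _ "{0}"])

lemma cheeger_bdd: "bdd_below {real (card (boundary S F)) / real (card F) | F. finite F \<and> F \<noteq> {}}"
  by (rule bdd_belowI[of _ 0]) auto

lemma cheeger_nonneg: "cheeger S \<ge> 0"
  unfolding cheeger_def by (rule cInf_greatest[OF cheeger_set_ne]) auto

lemma cheeger_le: "finite F \<Longrightarrow> F \<noteq> {} \<Longrightarrow> cheeger S \<le> real (card (boundary S F)) / real (card F)"
  unfolding cheeger_def by (rule cInf_lower[OF _ cheeger_bdd]) auto

lemma cheeger_ge: "(\<And>F. finite F \<Longrightarrow> F \<noteq> {} \<Longrightarrow> c \<le> real (card (boundary S F)) / real (card F)) \<Longrightarrow> c \<le> cheeger S"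
  unfolding cheeger_def by (rule cInf_greatest[OF cheeger_set_ne]) auto

lemma intc_boundary:
  assumes "finite S" "finite F"
  shows "intc S F + card (boundary S F) = card F * card S"
proof -
  have "F \<times> S = {(g,s). g\<in>F \<and> s\<in>S \<and> g + s \<in> F} \<union> boundary S F"
    by (auto simp: boundary_def)
  moreover have "{(g,s). g\<in>F \<and> s\<in>S \<and> g + s \<in> F} \<inter> boundary S F = {}"
    by (auto simp: boundary_def)
  moreover have "finite (F \<times> S)" using assms by simp
  ultimately have "card (F \<times> S) = intc S F + card (boundary S F)"
    unfolding intc_def
    by (metis (no_types, lifting) card_Un_disjoint finite_Un)
  thus ?thesis by (simp add: card_cartesian_product)
qed

lemma density:
  assumes "finite S" "finite G" "G \<noteq> {}"
  shows "real (intc S G) \<le> (real (card S) - cheeger S) * real (card G)"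
proof -
  have cg: "real (card G) > 0" using assms by (simp add: card_gt_0_iff)
  have "cheeger S * real (card G) \<le> real (card (boundary S G))"
    using cheeger_le[OF assms(2,3), of S] cg by (simp add: field_simps)
  moreover have "real (intc S G) + real (card (boundary S G)) = real (card G) * real (card S)"
    using intc_boundary[OF assms(1,2)] by (metis of_nat_add of_nat_mult)
  ultimately show ?thesis by (simp add: algebra_simps)
qed

lemma orient_uv:
  assumes "finite S" and sym: "\<forall>s\<in>S. - s \<in> S"
  shows "\<exists>w. (\<forall>x Y. finite Y \<longrightarrow> real (card {y\<in>Y. -x+y\<in>S \<and> w (x,y)}) \<le> 2 * (real (card S) - cheeger S))
           \<and> (\<forall>y X. finite X \<longrightarrow> real (card {x\<in>X. -x+y\<in>S \<and> \<not> w (x,y)}) \<le> 2 * (real (card S) - cheeger S))"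
proof -
  obtain w where w: "\<forall>z. real (loadU S w z) \<le> 2 * (real (card S) - cheeger S)"
    using global_orientation[OF assms, of "real (card S) - cheeger S"] density[OF assms(1)] by blast
  have "real (card {y\<in>Y. -x+y\<in>S \<and> w (x,y)}) \<le> 2 * (real (card S) - cheeger S)" for x Y
  proof -
    have "card {y\<in>Y. -x+y\<in>S \<and> w (x,y)} \<le> card {y. -x+y\<in>S \<and> w (x,y)}"
      using finite_nbrs1[OF assms(1), of x] by (intro card_mono) (auto elim: finite_subset[rotated])
    also have "\<dots> \<le> loadU S w x" unfolding loadU_def by simp
    finally show ?thesis using w[rule_format, of x] by linarith
  qed
  moreover have "real (card {x\<in>X. -x+y\<in>S \<and> \<not> w (x,y)}) \<le> 2 * (real (card S) - cheeger S)" for y X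
  proof -
    have "card {x\<in>X. -x+y\<in>S \<and> \<not> w (x,y)} \<le> card {x. -x+y\<in>S \<and> \<not> w (x,y)}"
      using finite_nbrs2[OF assms(1), of y] by (intro card_mono) (auto elim: finite_subset[rotated])
    also have "\<dots> \<le> loadU S w y" unfolding loadU_def by simp
    finally show ?thesis using w[rule_format, of y] by linarith
  qed
  ultimately show ?thesis by blast
qed

lemma e_const_card: "card S > 0 \<Longrightarrow> real (card S) * e_const S = real (card S) - cheeger S"
  unfolding e_const_def by (simp add: field_simps)

lemma e_le1: "e_const S \<le> 1"
  unfolding e_const_def using cheeger_nonneg[of S] by (simp add: divide_nonneg_nonneg)



lemma cheeger_le_card_minus1:
  assumes "finite S" "S \<noteq> {}" and sym: "\<forall>s\<in>S. - s \<in> S"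
  shows "cheeger S \<le> real (card S) - 1"
proof (cases "\<exists>s\<in>S. s \<noteq> 0")
  case True
  then obtain s where s: "s \<in> S" "s \<noteq> 0" by blast
  define F where "F = {0, s}"
  have cF: "card F = 2" using s by (simp add: F_def)
  have "boundary S F \<subseteq> (F \<times> S) - {(0,s), (s,-s)}"
    using s by (auto simp: boundary_def F_def)
  moreover have "{(0,s), (s,-s)} \<subseteq> F \<times> S" using s sym by (auto simp: F_def)
  moreover have "card {(0,s), (s,-s)} = 2" using s by simp
  ultimately have "card (boundary S F) \<le> 2 * card S - 2"
  proof -
    have fin: "finite (F \<times> S)" using assms(1) by (simp add: F_def)
    have "card (boundary S F) \<le> card ((F \<times> S) - {(0,s), (s,-s)})"
      using fin \<open>boundary S F \<subseteq> (F \<times> S) - {(0,s), (s,-s)}\<close> by (intro card_mono) auto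
    also have "\<dots> = card (F \<times> S) - 2"
      using \<open>{(0,s), (s,-s)} \<subseteq> F \<times> S\<close> \<open>card {(0,s), (s,-s)} = 2\<close> fin
      by (simp add: card_Diff_subset)
    also have "\<dots> = 2 * card S - 2" using cF by (simp add: card_cartesian_product)
    finally show ?thesis .
  qed
  hence "real (card (boundary S F)) \<le> 2 * real (card S) - 2"
  proof -
    have "card S \<ge> 1" using assms by (simp add: Suc_leI card_gt_0_iff)
    hence "real (2 * card S - 2) = 2 * real (card S) - 2" by (simp add: of_nat_diff)
    moreover have "real (card (boundary S F)) \<le> real (2 * card S - 2)" using \<open>card (boundary S F) \<le> 2 * card S - 2\<close> by linarith
    ultimately show ?thesis by linarith
  qed
  moreover have "cheeger S \<le> real (card (boundary S F)) / real (card F)"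
    by (rule cheeger_le) (auto simp: F_def)
  ultimately show ?thesis using cF by simp
next
  case False
  hence "S = {0}" using assms by auto
  have "cheeger S \<le> real (card (boundary S {0})) / real (card {0::'a})"
    by (rule cheeger_le) auto
  moreover have "boundary S {0} = {}" using \<open>S = {0}\<close> by (auto simp: boundary_def)
  ultimately show ?thesis using \<open>S = {0}\<close> by simp
qed

lemma e_ge:
  assumes "finite S" "S \<noteq> {}" and sym: "\<forall>s\<in>S. - s \<in> S"
  shows "e_const S \<ge> 1 / real (card S)"
proof -
  have c: "real (card S) > 0" using assms by (simp add: card_gt_0_iff)
  have "cheeger S / real (card S) \<le> (real (card S) - 1) / real (card S)"
    using cheeger_le_card_minus1[OF assms] c by (simp add: divide_right_mono)
  thus ?thesis unfolding e_const_def using c by (simp add: diff_divide_distrib)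
qed



lemma T1I:
  fixes f :: "'a::group_add \<Rightarrow> complex"
  assumes "\<And>x y. f (-x+y) = f1 x y + f2 x y"
    and r: "\<And>x Y. finite Y \<Longrightarrow> (\<Sum>y\<in>Y. norm (f1 x y)) \<le> C"
    and c: "\<And>y X. finite X \<Longrightarrow> (\<Sum>x\<in>X. norm (f2 x y)) \<le> C"
  shows "f \<in> T1 TYPE('a)"
proof -
  have s1: "(\<lambda>y. norm (f1 x y)) summable_on UNIV" for x
    using r by (intro nonneg_bdd_above_summable_on) (auto intro!: bdd_aboveI[of _ C])
  have s2: "(\<lambda>x. norm (f2 x y)) summable_on UNIV" for y
    using c by (intro nonneg_bdd_above_summable_on) (auto intro!: bdd_aboveI[of _ C])
  have i1: "(\<Sum>\<^sub>\<infinity>y. norm (f1 x y)) \<le> C" for x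
    using r s1 by (intro infsum_le_finite_sums) auto
  have i2: "(\<Sum>\<^sub>\<infinity>x. norm (f2 x y)) \<le> C" for y
    using c s2 by (intro infsum_le_finite_sums) auto
  show ?thesis unfolding T1_def using assms(1) s1 s2 i1 i2 by blast
qed

lemma geom_finite_bound:
  assumes "finite K"
  shows "(\<Sum>k\<in>K. (1/2::real)^k) \<le> 2"
proof -
  have "(\<Sum>k\<in>K. (1/2::real)^k) \<le> (\<Sum>k. (1/2::real)^k)"
    by (rule sum_le_suminf) (auto simp: assms summable_geometric)
  also have "\<dots> = 2" using suminf_geometric[of "1/2::real"] by simp
  finally show ?thesis .
qed

lemma group_bound:
  fixes r :: "'b \<Rightarrow> real" and \<kappa> :: "'b \<Rightarrow> nat"
  assumes "finite Y" "\<And>y. y \<in> Y \<Longrightarrow> 0 \<le> r y"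
    and "\<And>k. (\<Sum>y\<in>{y\<in>Y. \<kappa> y = k}. r y) \<le> 2 * (1/2)^k"
  shows "(\<Sum>y\<in>Y. r y) \<le> 4"
proof -
  have "(\<Sum>y\<in>Y. r y) = (\<Sum>k\<in>\<kappa> ` Y. \<Sum>y\<in>{y\<in>Y. \<kappa> y = k}. r y)"
    using assms(1) by (rule sum.image_gen)
  also have "\<dots> \<le> (\<Sum>k\<in>\<kappa> ` Y. 2 * (1/2)^k)"
    by (rule sum_mono) (rule assms(3))
  also have "\<dots> = 2 * (\<Sum>k\<in>\<kappa> ` Y. (1/2)^k)" by (simp add: sum_distrib_left)
  also have "\<dots> \<le> 4" using geom_finite_bound[of "\<kappa> ` Y"] assms(1) by simp
  finally show ?thesis .
qed



lemma exists_big_superset: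
  assumes inf: "infinite (UNIV::'a::group_add set)"
    and H: "\<forall>S0\<in>fin_sym_subsets TYPE('a). \<exists>S'\<in>fin_sym_subsets TYPE('a). S0 \<subseteq> S' \<and> e_const S' \<le> real (card S') powr (-\<theta>)"
    and W: "W \<in> fin_sym_subsets TYPE('a)"
  shows "\<exists>S'. S' \<in> fin_sym_subsets TYPE('a) \<and> W \<subseteq> S' \<and> e_const S' \<le> real (card S') powr (-\<theta>) \<and> card S' \<ge> n"
proof -
  obtain A :: "'a set" where A: "finite A" "card A = n" using infinite_arbitrarily_large[OF inf] by blast
  define S0 where "S0 = W \<union> A \<union> uminus ` A"
  have "S0 \<in> fin_sym_subsets TYPE('a)" using W A by (auto simp: S0_def fin_sym_subsets_def)
  then obtain S' where S': "S' \<in> fin_sym_subsets TYPE('a)" "S0 \<subseteq> S'" "e_const S' \<le> real (card S') powr (-\<theta>)"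
    using H by blast
  have "card A \<le> card S'" using S' by (intro card_mono) (auto simp: fin_sym_subsets_def S0_def)
  thus ?thesis using S' A by (auto simp: S0_def)
qed



lemma D2_main:
  assumes inf: "infinite (UNIV::'a::group_add set)"
    and th: "0 \<le> \<theta>" "\<theta> < 1" and p: "0 < p" "p * (1 - \<theta>) < 1"
    and H: "\<forall>S0\<in>fin_sym_subsets TYPE('a). \<exists>S'\<in>fin_sym_subsets TYPE('a). S0 \<subseteq> S' \<and> e_const S' \<le> real (card S') powr (-\<theta>)"
  shows "\<not> T1 TYPE('a) \<subseteq> lp_space p"
proof
  assume sub: "T1 TYPE('a) \<subseteq> lp_space p"
  define FS where "FS = fin_sym_subsets TYPE('a)"
  define \<beta> where "\<beta> = 1 - p * (1 - \<theta>)"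
  have \<beta>: "\<beta> > 0" using p by (simp add: \<beta>_def)
  define X :: "nat \<Rightarrow> real" where "X k = 2 * real (Suc k) * 2 powr (real k * p)" for k
  define M where "M k = nat \<lceil>X k powr (1/\<beta>)\<rceil> + 1" for k
  define P where "P k W S' \<longleftrightarrow> S' \<in> FS \<and> W \<subseteq> S' \<and> e_const S' \<le> real (card S') powr (-\<theta>) \<and> card S' \<ge> 2 * card W + M k"
    for k W and S' :: "'a set"
  have exP: "\<exists>S'. P k W S'" if "W \<in> FS" for k W
    using exists_big_superset[OF inf H, of W "2 * card W + M k"] that unfolding P_def FS_def by blast
  define Wq :: "nat \<Rightarrow> 'a set" where "Wq = rec_nat {} (\<lambda>k W. SOME S'. P k W S')"
  have Wq0: "Wq 0 = {}" by (simp add: Wq_def)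
  have WqS: "Wq (Suc k) = (SOME S'. P k (Wq k) S')" for k by (simp add: Wq_def)
  have WFS: "Wq k \<in> FS \<and> P k (Wq k) (Wq (Suc k))" for k
  proof (induction k)
    case 0
    have "{} \<in> FS" by (simp add: FS_def fin_sym_subsets_def)
    thus ?case using someI_ex[OF exP[of "{}" 0]] by (simp add: Wq0 WqS)
  next
    case (Suc k)
    hence A: "Wq (Suc k) \<in> FS" by (simp add: P_def)
    thus ?case using someI_ex[OF exP[OF A, of "Suc k"]] by (simp add: WqS[of "Suc k"])
  qed
  define S where "S k = Wq (Suc k)" for k
  define T where "T k = S k - Wq k" for k
  have PS: "P k (Wq k) (S k)" for k using WFS unfolding S_def by blast
  have SFS: "S k \<in> FS" for k using PS by (simp add: P_def)
  have finS: "finite (S k)" and symS: "\<forall>s\<in>S k. - s \<in> S k" for k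
    using SFS[of k] by (auto simp: FS_def fin_sym_subsets_def)
  have monoW: "mono Wq" using PS unfolding S_def P_def mono_iff_le_Suc by blast
  have TS: "T k \<subseteq> S k" for k by (auto simp: T_def)
  have disj: "j = k" if "z \<in> T j" "z \<in> T k" for j k z
  proof (rule ccontr)
    assume "j \<noteq> k"
    then consider "j < k" | "k < j" by linarith
    thus False
    proof cases
      case 1
      hence "S j \<subseteq> Wq k" using monoW unfolding S_def by (simp add: monoD Suc_leI)
      thus False using that by (auto simp: T_def)
    next
      case 2
      hence "S k \<subseteq> Wq j" using monoW unfolding S_def by (simp add: monoD Suc_leI)
      thus False using that by (auto simp: T_def)
    qed
  qed
  define N where "N k = real (card (S k))" for k
  have XM: "X k powr (1/\<beta>) \<le> real (M k)" for k
    unfolding M_def by linarith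
  have Npos: "N k \<ge> 1" for k
    using PS[of k] unfolding P_def N_def M_def by simp
  have cardT: "real (card (T k)) \<ge> N k / 2" for k
  proof -
    have sub: "Wq k \<subseteq> S k" using PS[of k] by (simp add: P_def)
    have "card (T k) = card (S k) - card (Wq k)" unfolding T_def using sub finS[of k]
      by (simp add: card_Diff_subset finite_subset)
    moreover have "2 * card (Wq k) \<le> card (S k)" using PS[of k] by (simp add: P_def)
    ultimately show ?thesis unfolding N_def by simp
  qed
  have NX: "N k powr \<beta> \<ge> X k" for k
  proof -
    have Xpos: "X k > 0" by (simp add: X_def)
    have "X k = (X k powr (1/\<beta>)) powr \<beta>" using \<beta> Xpos by (simp add: powr_powr)
    also have "\<dots> \<le> N k powr \<beta>"
      using XM[of k] PS[of k] \<beta> unfolding P_def N_def by (intro powr_mono2) auto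
    finally show ?thesis .
  qed
  define c where "c k = 2 powr (- real k) * N k powr (\<theta> - 1)" for k
  have cpos: "c k > 0" for k using Npos[of k] by (simp add: c_def)
  have cD: "c k * (2 * (real (card (S k)) - cheeger (S k))) \<le> 2 * (1/2)^k" for k
  proof -
    have "real (card (S k)) - cheeger (S k) = N k * e_const (S k)"
      using e_const_card[of "S k"] Npos[of k] unfolding N_def by simp
    also have "\<dots> \<le> N k * N k powr (-\<theta>)"
      using PS[of k] Npos[of k] unfolding P_def N_def by (intro mult_left_mono) auto
    also have "\<dots> = N k powr (1 - \<theta>)"
    proof -
      have "N k powr (1 - \<theta>) = N k powr 1 * N k powr (-\<theta>)"
        by (metis diff_conv_add_uminus powr_add)
      thus ?thesis using Npos[of k] by simp
    qed
    finally have "c k * (2 * (real (card (S k)) - cheeger (S k))) \<le> c k * (2 * N k powr (1 - \<theta>))"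
      using cpos[of k] by (intro mult_left_mono) auto
    also have "\<dots> = 2 * 2 powr (- real k) * (N k powr (\<theta> - 1) * N k powr (1 - \<theta>))"
      by (simp add: c_def)
    also have "N k powr (\<theta> - 1) * N k powr (1 - \<theta>) = 1"
      using Npos[of k] by (simp add: powr_add[symmetric])
    also have "2 powr (- real k) = (1/2::real)^k"
      by (simp add: powr_minus powr_realpow power_one_over inverse_eq_divide)
    finally show ?thesis by simp
  qed
  define Q where "Q k w \<longleftrightarrow> (\<forall>x Y. finite Y \<longrightarrow> real (card {y\<in>Y. -x+y\<in>S k \<and> w (x,y)}) \<le> 2 * (real (card (S k)) - cheeger (S k)))
           \<and> (\<forall>y X. finite X \<longrightarrow> real (card {x\<in>X. -x+y\<in>S k \<and> \<not> w (x,y)}) \<le> 2 * (real (card (S k)) - cheeger (S k)))" for k w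
  have "\<forall>k. \<exists>w. Q k w" unfolding Q_def using orient_uv[OF finS symS] by blast
  then obtain wk where wkQ: "\<forall>k. Q k (wk k)" by (rule choice[THEN exE])
  have wk: "\<And>k x Y. finite Y \<Longrightarrow> real (card {y\<in>Y. -x+y\<in>S k \<and> wk k (x,y)}) \<le> 2 * (real (card (S k)) - cheeger (S k))"
      "\<And>k y X. finite X \<Longrightarrow> real (card {x\<in>X. -x+y\<in>S k \<and> \<not> wk k (x,y)}) \<le> 2 * (real (card (S k)) - cheeger (S k))"
    using wkQ unfolding Q_def by blast+
  define idx where "idx z = (LEAST k. z \<in> T k)" for z
  have idx: "idx z = k" if "z \<in> T k" for z k
  proof -
    have "z \<in> T (idx z)" unfolding idx_def using that by (rule LeastI)
    thus ?thesis using disj that by blast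
  qed
  define inT where "inT z \<longleftrightarrow> (\<exists>k. z \<in> T k)" for z
  define g where "g z = (if inT z then c (idx z) else 0)" for z
  define u where "u x y = (if inT (-x+y) \<and> wk (idx (-x+y)) (x,y) then c (idx (-x+y)) else 0)" for x y
  define v where "v x y = (if inT (-x+y) \<and> \<not> wk (idx (-x+y)) (x,y) then c (idx (-x+y)) else 0)" for x y
  define f where "f z = complex_of_real (g z)" for z
  have unn: "u x y \<ge> 0" "v x y \<ge> 0" for x y using cpos by (auto simp: u_def v_def less_imp_le)
  have "f \<in> T1 TYPE('a)"
  proof (rule T1I[of f "\<lambda>x y. complex_of_real (u x y)" "\<lambda>x y. complex_of_real (v x y)" 4])
    show "f (-x+y) = complex_of_real (u x y) + complex_of_real (v x y)" for x y
      by (simp add: f_def g_def u_def v_def)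
    show "(\<Sum>y\<in>Y. norm (complex_of_real (u x y))) \<le> 4" if "finite Y" for x Y
    proof -
      have "(\<Sum>y\<in>Y. u x y) \<le> 4"
      proof (rule group_bound[where \<kappa>="\<lambda>y. idx (-x+y)"])
        show "(\<Sum>y\<in>{y\<in>Y. idx (-x+y) = k}. u x y) \<le> 2 * (1/2)^k" for k
        proof -
          have "(\<Sum>y\<in>{y\<in>Y. idx (-x+y) = k}. u x y) \<le> (\<Sum>y\<in>{y\<in>Y. -x+y\<in>S k \<and> wk k (x,y)}. c k)"
          proof -
            have "(\<Sum>y\<in>{y\<in>Y. idx (-x+y) = k}. u x y) = (\<Sum>y\<in>{y\<in>Y. idx (-x+y) = k \<and> inT (-x+y) \<and> wk k (x,y)}. c k)"
              using that by (intro sum.mono_neutral_cong_right) (auto simp: u_def)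
            also have "\<dots> \<le> (\<Sum>y\<in>{y\<in>Y. -x+y\<in>S k \<and> wk k (x,y)}. c k)"
            proof (rule sum_mono2)
              show "finite {y\<in>Y. -x+y\<in>S k \<and> wk k (x,y)}" using that by simp
              show "{y\<in>Y. idx (-x+y) = k \<and> inT (-x+y) \<and> wk k (x,y)} \<subseteq> {y\<in>Y. -x+y\<in>S k \<and> wk k (x,y)}"
                using TS idx unfolding inT_def by blast
              show "\<And>b. b \<in> {y\<in>Y. -x+y\<in>S k \<and> wk k (x,y)} - {y\<in>Y. idx (-x+y) = k \<and> inT (-x+y) \<and> wk k (x,y)} \<Longrightarrow> 0 \<le> c k"
                using cpos less_imp_le by blast
            qed
            finally show ?thesis .
          qed
          also have "\<dots> = c k * real (card {y\<in>Y. -x+y\<in>S k \<and> wk k (x,y)})" by simp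
          also have "\<dots> \<le> c k * (2 * (real (card (S k)) - cheeger (S k)))"
            using wk(1)[OF that, where k=k and x=x] cpos[of k] by (intro mult_left_mono) auto
          also have "\<dots> \<le> 2 * (1/2)^k" by (rule cD)
          finally show ?thesis .
        qed
      qed (use that unn in auto)
      thus ?thesis using unn by simp
    qed
    show "(\<Sum>x\<in>X. norm (complex_of_real (v x y))) \<le> 4" if "finite X" for y X
    proof -
      have "(\<Sum>x\<in>X. v x y) \<le> 4"
      proof (rule group_bound[where \<kappa>="\<lambda>x. idx (-x+y)"])
        show "(\<Sum>x\<in>{x\<in>X. idx (-x+y) = k}. v x y) \<le> 2 * (1/2)^k" for k
        proof -
          have "(\<Sum>x\<in>{x\<in>X. idx (-x+y) = k}. v x y) \<le> (\<Sum>x\<in>{x\<in>X. -x+y\<in>S k \<and> \<not> wk k (x,y)}. c k)"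
          proof -
            have "(\<Sum>x\<in>{x\<in>X. idx (-x+y) = k}. v x y) = (\<Sum>x\<in>{x\<in>X. idx (-x+y) = k \<and> inT (-x+y) \<and> \<not> wk k (x,y)}. c k)"
              using that by (intro sum.mono_neutral_cong_right) (auto simp: v_def)
            also have "\<dots> \<le> (\<Sum>x\<in>{x\<in>X. -x+y\<in>S k \<and> \<not> wk k (x,y)}. c k)"
            proof (rule sum_mono2)
              show "finite {x\<in>X. -x+y\<in>S k \<and> \<not> wk k (x,y)}" using that by simp
              show "{x\<in>X. idx (-x+y) = k \<and> inT (-x+y) \<and> \<not> wk k (x,y)} \<subseteq> {x\<in>X. -x+y\<in>S k \<and> \<not> wk k (x,y)}"
                using TS idx unfolding inT_def by blast
              show "\<And>b. b \<in> {x\<in>X. -x+y\<in>S k \<and> \<not> wk k (x,y)} - {x\<in>X. idx (-x+y) = k \<and> inT (-x+y) \<and> \<not> wk k (x,y)} \<Longrightarrow> 0 \<le> c k"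
                using cpos less_imp_le by blast
            qed
            finally show ?thesis .
          qed
          also have "\<dots> = c k * real (card {x\<in>X. -x+y\<in>S k \<and> \<not> wk k (x,y)})" by simp
          also have "\<dots> \<le> c k * (2 * (real (card (S k)) - cheeger (S k)))"
            using wk(2)[OF that, where k=k and y=y] cpos[of k] by (intro mult_left_mono) auto
          also have "\<dots> \<le> 2 * (1/2)^k" by (rule cD)
          finally show ?thesis .
        qed
      qed (use that unn in auto)
      thus ?thesis using unn by simp
    qed
  qed
  hence summ: "(\<lambda>z. norm (f z) powr p) summable_on UNIV" using sub by (auto simp: lp_space_def)
  define s where "s = (\<Sum>\<^sub>\<infinity>z. norm (f z) powr p)"
  have "real (Suc k) \<le> s" for k
  proof -
    have fT: "finite (T k)" using finS[of k] TS[of k] finite_subset by blast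
    have "(\<Sum>z\<in>T k. norm (f z) powr p) \<le> s"
      unfolding s_def using summ fT by (intro finite_sum_le_infsum) auto
    moreover have "(\<Sum>z\<in>T k. norm (f z) powr p) = real (card (T k)) * c k powr p"
    proof -
      have "norm (f z) powr p = c k powr p" if "z \<in> T k" for z
        using that idx[OF that] cpos[of k] by (auto simp: f_def g_def inT_def)
      thus ?thesis by simp
    qed
    moreover have "real (Suc k) \<le> real (card (T k)) * c k powr p"
    proof -
      have ck: "c k powr p = 2 powr (- real k * p) * N k powr ((\<theta> - 1) * p)"
        using Npos[of k] by (simp add: c_def powr_mult powr_powr)
      have "real (card (T k)) * c k powr p \<ge> (N k / 2) * (2 powr (- real k * p) * N k powr ((\<theta> - 1) * p))"
        unfolding ck using cardT[of k] by (intro mult_right_mono) auto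
      also have "(N k / 2) * (2 powr (- real k * p) * N k powr ((\<theta> - 1) * p)) = 2 powr (- real k * p) * N k powr \<beta> / 2"
      proof -
        have "N k powr \<beta> = N k powr 1 * N k powr ((\<theta> - 1) * p)"
          unfolding \<beta>_def powr_add[symmetric] by (simp add: algebra_simps)
        hence "N k * N k powr ((\<theta> - 1) * p) = N k powr \<beta>"
          using Npos[of k] by simp
        thus ?thesis by (simp add: algebra_simps)
      qed
      also have "\<dots> \<ge> 2 powr (- real k * p) * X k / 2"
        using NX[of k] by (simp add: divide_right_mono)
      also have "2 powr (- real k * p) * X k / 2 = real (Suc k)"
        by (simp add: X_def powr_minus field_simps)
      finally show ?thesis .
    qed
    ultimately show ?thesis by linarith
  qed
  from this[of "nat \<lceil>s\<rceil>"] show False by linarith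
qed



lemma geom_finite_bound':
  assumes "finite K" "0 \<le> \<rho>" "\<rho> < (1::real)"
  shows "(\<Sum>k\<in>K. \<rho>^k) \<le> 1 / (1 - \<rho>)"
proof -
  have "(\<Sum>k\<in>K. \<rho>^k) \<le> (\<Sum>k. \<rho>^k)"
    by (rule sum_le_suminf) (auto simp: assms summable_geometric)
  also have "\<dots> = 1 / (1 - \<rho>)" using suminf_geometric[of \<rho>] assms by simp
  finally show ?thesis .
qed

lemma a1: "K / (1/2::real)^(Suc k) = K * 2 powr (real k + 1)"
  by (simp add: powr_add power_one_over field_simps powr_realpow)
lemma a2: "K > 0 \<Longrightarrow> (K * 2 powr (real k + 1)) powr q = K powr q * 2 powr q * 2 powr (real k * q)"
  by (simp add: powr_mult powr_powr powr_add distrib_right)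
lemma a3: "((1/2::real)^k) powr p = 2 powr (- (real k * p))"
proof -
  have "((1/2::real)^k) = 2 powr (- real k)" by (simp add: powr_minus powr_realpow power_one_over inverse_eq_divide)
  thus ?thesis by (simp add: powr_powr)
qed
lemma a4: "(2 powr (q - p))^k = 2 powr (real k * q) * 2 powr (- (real k * p))"
  by (simp add: powr_realpow[symmetric] powr_powr powr_add[symmetric] right_diff_distrib mult.commute)

lemma weak_to_strong:
  fixes h :: "'b \<Rightarrow> real"
  assumes nn: "\<And>z. h z \<ge> 0" and q: "q > 0" "p > q" and K: "K > 0"
    and weak: "\<And>t. 0 < t \<Longrightarrow> t \<le> 1 \<Longrightarrow> finite {z. h z \<ge> t} \<and> real (card {z. h z \<ge> t}) \<le> (K / t) powr q"
  shows "(\<lambda>z. h z powr p) summable_on UNIV"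
proof -
  define L where "L t = {z. h z \<ge> t}" for t
  define \<rho> :: real where "\<rho> = 2 powr (q - p)"
  have "(2::real) powr (q - p) < 2 powr 0" using q by (intro powr_less_mono) auto
  hence \<rho>: "0 \<le> \<rho>" "\<rho> < 1" by (auto simp: \<rho>_def)
  define B0 where "B0 = (\<Sum>z\<in>L 1. h z powr p) + K powr q * 2 powr q * (1 / (1 - \<rho>))"
  have p0: "p > 0" using q by simp
  have "(\<Sum>z\<in>B. h z powr p) \<le> B0" if B: "finite B" for B
  proof -
    define B1 where "B1 = B \<inter> L 1"
    define B2 where "B2 = {z\<in>B - L 1. h z > 0}"
    have "(\<Sum>z\<in>B. h z powr p) = (\<Sum>z\<in>B - B1. h z powr p) + (\<Sum>z\<in>B1. h z powr p)"
      by (rule sum.subset_diff) (auto simp: B1_def B)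
    moreover have "B - B1 = B - L 1" by (auto simp: B1_def)
    ultimately have "(\<Sum>z\<in>B. h z powr p) = (\<Sum>z\<in>B1. h z powr p) + (\<Sum>z\<in>B - L 1. h z powr p)"
      by simp
    also have "(\<Sum>z\<in>B - L 1. h z powr p) = (\<Sum>z\<in>B2. h z powr p)"
      unfolding B2_def using B nn by (intro sum.mono_neutral_cong_right) (auto simp: order.order_iff_strict)
    also have "(\<Sum>z\<in>B1. h z powr p) \<le> (\<Sum>z\<in>L 1. h z powr p)"
      unfolding B1_def using weak[of 1] by (intro sum_mono2) (auto simp: L_def)
    also have "(\<Sum>z\<in>B2. h z powr p) \<le> K powr q * 2 powr q * (1 / (1 - \<rho>))"
    proof -
      have ex: "\<exists>k. h z > (1/2)^(Suc k)" if "z \<in> B2" for z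
      proof -
        have "h z > 0" using that by (simp add: B2_def)
        then obtain k where "(1/2::real)^k < h z" using real_arch_pow_inv[of "h z" "1/2"] by auto
        moreover have "(1/2::real)^(Suc k) = (1/2)^k / 2" by simp
        moreover have "(0::real) < (1/2)^k" by simp
        ultimately have "(1/2::real)^(Suc k) < h z" by linarith
        thus ?thesis by blast
      qed
      define \<kappa> where "\<kappa> z = (LEAST k. h z > (1/2::real)^(Suc k))" for z
      have k1: "h z > (1/2)^(Suc (\<kappa> z))" if "z \<in> B2" for z
        unfolding \<kappa>_def using ex[OF that] by (rule LeastI_ex)
      have k2: "h z \<le> (1/2)^(\<kappa> z)" if "z \<in> B2" for z
      proof (cases "\<kappa> z")
        case 0 thus ?thesis using that by (simp add: B2_def L_def)
      next
        case (Suc m)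
        have "\<not> h z > (1/2)^(Suc m)" unfolding \<kappa>_def
          using not_less_Least[of m "\<lambda>k. h z > (1/2::real)^(Suc k)"] Suc \<kappa>_def by simp
        thus ?thesis using Suc by simp
      qed
      have layer: "(\<Sum>z\<in>{z\<in>B2. \<kappa> z = k}. h z powr p) \<le> K powr q * 2 powr q * \<rho>^k" for k
      proof -
        define t where "t = (1/2::real)^(Suc k)"
        have t: "0 < t" "t \<le> 1" using power_le_one[of "1/2::real" "Suc k"] unfolding t_def by auto
        have "(\<Sum>z\<in>{z\<in>B2. \<kappa> z = k}. h z powr p) \<le> (\<Sum>z\<in>{z\<in>B2. \<kappa> z = k}. ((1/2::real)^k) powr p)"
          using k2 nn p0 by (intro sum_mono powr_mono2) auto
        also have "\<dots> = real (card {z\<in>B2. \<kappa> z = k}) * ((1/2::real)^k) powr p" by simp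
        also have "\<dots> \<le> real (card (L t)) * ((1/2::real)^k) powr p"
        proof -
          have "{z\<in>B2. \<kappa> z = k} \<subseteq> L t" using k1 unfolding L_def t_def by (force simp: less_imp_le)
          hence "card {z\<in>B2. \<kappa> z = k} \<le> card (L t)" using weak[OF t] by (intro card_mono) (auto simp: L_def)
          thus ?thesis by (intro mult_right_mono) auto
        qed
        also have "\<dots> \<le> (K / t) powr q * ((1/2::real)^k) powr p"
          using weak[OF t] by (intro mult_right_mono) (auto simp: L_def)
        also have "(K / t) powr q * ((1/2::real)^k) powr p = K powr q * 2 powr q * \<rho>^k"
        proof -
          have "K / t = K * 2 powr (real k + 1)"
            unfolding t_def by (rule a1)
          hence "(K / t) powr q = K powr q * 2 powr q * 2 powr (real k * q)"
            using K by (simp add: a2)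
          moreover have "((1/2::real)^k) powr p = 2 powr (- (real k * p))"
            by (rule a3)
          moreover have "\<rho>^k = 2 powr (real k * q) * 2 powr (- (real k * p))"
            unfolding \<rho>_def by (rule a4)
          ultimately show ?thesis by simp
        qed
        finally show ?thesis .
      qed
      have "(\<Sum>z\<in>B2. h z powr p) = (\<Sum>k\<in>\<kappa> ` B2. \<Sum>z\<in>{z\<in>B2. \<kappa> z = k}. h z powr p)"
        using B by (intro sum.image_gen) (simp add: B2_def)
      also have "\<dots> \<le> (\<Sum>k\<in>\<kappa> ` B2. K powr q * 2 powr q * \<rho>^k)"
        by (rule sum_mono) (rule layer)
      also have "\<dots> = K powr q * 2 powr q * (\<Sum>k\<in>\<kappa> ` B2. \<rho>^k)" by (simp add: sum_distrib_left)
      also have "\<dots> \<le> K powr q * 2 powr q * (1 / (1 - \<rho>))"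
        using geom_finite_bound'[of "\<kappa> ` B2" \<rho>] \<rho> B by (intro mult_left_mono) (auto simp: B2_def)
      finally show ?thesis .
    qed
    finally show ?thesis unfolding B0_def by simp
  qed
  thus ?thesis
    using nn by (intro nonneg_bdd_above_summable_on) (auto intro!: bdd_aboveI[of _ B0])
qed



lemma T1_bounds:
  fixes f :: "'a::group_add \<Rightarrow> complex"
  assumes "f \<in> T1 TYPE('a)"
  shows "\<exists>C\<ge>0. \<forall>F. finite F \<longrightarrow> (\<Sum>x\<in>F. \<Sum>y\<in>F. norm (f (-x+y))) \<le> 2 * C * real (card F)"
proof -
  obtain f1 f2 C1 C2 where eq: "\<And>x y. f (-x+y) = f1 x y + f2 x y"
    and s1: "\<And>x. (\<lambda>y. norm (f1 x y)) summable_on UNIV" and b1: "\<And>x. (\<Sum>\<^sub>\<infinity>y. norm (f1 x y)) \<le> C1"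
    and s2: "\<And>y. (\<lambda>x. norm (f2 x y)) summable_on UNIV" and b2: "\<And>y. (\<Sum>\<^sub>\<infinity>x. norm (f2 x y)) \<le> C2"
    using assms unfolding T1_def by blast
  define C where "C = max 0 (max C1 C2)"
  have r1: "(\<Sum>y\<in>F. norm (f1 x y)) \<le> C" if "finite F" for F x
  proof -
    have "(\<Sum>y\<in>F. norm (f1 x y)) \<le> (\<Sum>\<^sub>\<infinity>y. norm (f1 x y))"
      using s1 that by (intro finite_sum_le_infsum) auto
    thus ?thesis using b1[of x] by (simp add: C_def)
  qed
  have r2: "(\<Sum>x\<in>F. norm (f2 x y)) \<le> C" if "finite F" for F y
  proof -
    have "(\<Sum>x\<in>F. norm (f2 x y)) \<le> (\<Sum>\<^sub>\<infinity>x. norm (f2 x y))"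
      using s2 that by (intro finite_sum_le_infsum) auto
    thus ?thesis using b2[of y] by (simp add: C_def)
  qed
  have "(\<Sum>x\<in>F. \<Sum>y\<in>F. norm (f (-x+y))) \<le> 2 * C * real (card F)" if F: "finite F" for F
  proof -
    have "(\<Sum>x\<in>F. \<Sum>y\<in>F. norm (f (-x+y))) \<le> (\<Sum>x\<in>F. \<Sum>y\<in>F. norm (f1 x y) + norm (f2 x y))"
      unfolding eq by (intro sum_mono norm_triangle_ineq)
    also have "\<dots> = (\<Sum>x\<in>F. \<Sum>y\<in>F. norm (f1 x y)) + (\<Sum>y\<in>F. \<Sum>x\<in>F. norm (f2 x y))"
      by (simp add: sum.distrib sum.swap[of "\<lambda>x y. norm (f2 x y)" F F])
    also have "\<dots> \<le> (\<Sum>x\<in>F. C) + (\<Sum>y\<in>F. C)"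
      using r1[OF F] r2[OF F] by (intro add_mono sum_mono) auto
    finally show ?thesis by simp
  qed
  moreover have "C \<ge> 0" by (simp add: C_def)
  ultimately show ?thesis by blast
qed

lemma pair_bound:
  fixes f :: "'a::group_add \<Rightarrow> complex"
  assumes C: "\<And>F. finite F \<Longrightarrow> (\<Sum>x\<in>F. \<Sum>y\<in>F. norm (f (-x+y))) \<le> 2 * C * real (card F)"
    and F: "finite F" and A: "finite A" and t: "\<And>s. s \<in> A \<Longrightarrow> t \<le> norm (f s) + norm (f (-s))"
  shows "t * real (card {(x,s). x\<in>F \<and> s\<in>A \<and> x+s\<in>F}) \<le> 4 * C * real (card F)"
proof -
  define P where "P = {(x,s). x\<in>F \<and> s\<in>A \<and> x+s\<in>F}"
  have "P \<subseteq> F \<times> A" by (auto simp: P_def)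
  hence finP: "finite P" using F A finite_subset by blast
  define G where "G = (\<lambda>(x,y). norm (f (-x+y)))"
  have FF: "(\<Sum>q\<in>F\<times>F. G q) \<le> 2 * C * real (card F)"
    using C[OF F] by (simp add: G_def sum.cartesian_product)
  have nnG: "G q \<ge> 0" for q by (auto simp: G_def split: prod.splits)
  define \<phi> where "\<phi> = (\<lambda>(x::'a,s::'a). (x, x+s))"
  define \<psi> where "\<psi> = (\<lambda>(x::'a,s::'a). (x+s, x))"
  have inj\<phi>: "inj_on \<phi> P" by (auto simp: inj_on_def \<phi>_def)
  have inj\<psi>: "inj_on \<psi> P" by (auto simp: inj_on_def \<psi>_def)
  have "(\<Sum>q\<in>P. norm (f (snd q))) = (\<Sum>q\<in>P. G (\<phi> q))"
    by (intro sum.cong) (auto simp: G_def \<phi>_def add.assoc[symmetric])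
  also have "\<dots> = (\<Sum>q\<in>\<phi> ` P. G q)" using inj\<phi> by (simp add: sum.reindex)
  also have "\<dots> \<le> (\<Sum>q\<in>F\<times>F. G q)"
    using F nnG by (intro sum_mono2) (auto simp: P_def \<phi>_def)
  finally have s1: "(\<Sum>q\<in>P. norm (f (snd q))) \<le> 2 * C * real (card F)" using FF by linarith
  have "(\<Sum>q\<in>P. norm (f (- snd q))) = (\<Sum>q\<in>P. G (\<psi> q))"
  proof (intro sum.cong refl)
    fix q assume "q \<in> P"
    obtain x s where q: "q = (x,s)" by fastforce
    have "-(x+s) + x = -s" by (simp add: minus_add add.assoc)
    thus "norm (f (- snd q)) = G (\<psi> q)" by (simp add: q G_def \<psi>_def)
  qed
  also have "\<dots> = (\<Sum>q\<in>\<psi> ` P. G q)" using inj\<psi> by (simp add: sum.reindex)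
  also have "\<dots> \<le> (\<Sum>q\<in>F\<times>F. G q)"
    using F nnG by (intro sum_mono2) (auto simp: P_def \<psi>_def)
  finally have s2: "(\<Sum>q\<in>P. norm (f (- snd q))) \<le> 2 * C * real (card F)" using FF by linarith
  have "t * real (card P) = (\<Sum>q\<in>P. t)" by simp
  also have "\<dots> \<le> (\<Sum>q\<in>P. norm (f (snd q)) + norm (f (- snd q)))"
    using t by (intro sum_mono) (auto simp: P_def)
  also have "\<dots> \<le> 4 * C * real (card F)" using s1 s2 by (simp add: sum.distrib)
  finally show ?thesis by (simp add: P_def)
qed



lemma level_bound:
  fixes f :: "'a::group_add \<Rightarrow> complex"
  assumes fT: "f \<in> T1 TYPE('a)" and th: "0 \<le> \<theta>" "\<theta> < 1"
    and S0: "S0 \<in> fin_sym_subsets TYPE('a)"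
    and H: "\<forall>S'\<in>fin_sym_subsets TYPE('a). S0 \<subseteq> S' \<longrightarrow> card S' \<ge> 2 \<longrightarrow> e_const S' \<ge> real (card S') powr (-\<theta>)"
  shows "\<exists>K>0. \<forall>t. 0 < t \<longrightarrow> t \<le> 1 \<longrightarrow> finite {z. norm (f z) + norm (f (-z)) \<ge> t}
            \<and> real (card {z. norm (f z) + norm (f (-z)) \<ge> t}) \<le> (K / t) powr (1 / (1 - \<theta>))"
proof -
  obtain C where C0: "C \<ge> 0" and C: "\<And>F. finite F \<Longrightarrow> (\<Sum>x\<in>F. \<Sum>y\<in>F. norm (f (-x+y))) \<le> 2 * C * real (card F)"
    using T1_bounds[OF fT] by blast
  define h where "h z = norm (f z) + norm (f (-z))" for z
  define q where "q = 1 / (1 - \<theta>)"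
  have q: "q > 0" using th by (simp add: q_def)
  have finS0: "finite S0" using S0 by (simp add: fin_sym_subsets_def)
  define K where "K = real (card S0) + 4 * C + 1"
  have K: "K > 0" using C0 by (simp add: K_def)
  have symb: "real (card A) \<le> (K / t) powr q"
    if A: "finite A" "\<forall>s\<in>A. - s \<in> A" "\<And>s. s \<in> A \<Longrightarrow> t \<le> h s" and t: "0 < t" "t \<le> 1" for A t
  proof -
    define S' where "S' = A \<union> S0"
    have S'FS: "S' \<in> fin_sym_subsets TYPE('a)"
      using A S0 by (auto simp: S'_def fin_sym_subsets_def)
    have finS': "finite S'" using A finS0 by (simp add: S'_def)
    have ch: "real (card A) - 4 * C / t \<le> cheeger S'"
    proof (rule cheeger_ge)
      fix F :: "'a set" assume F: "finite F" "F \<noteq> {}"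
      have cF: "real (card F) > 0" using F by (simp add: card_gt_0_iff)
      have tP: "t * real (intc A F) \<le> 4 * C * real (card F)"
        unfolding intc_def using pair_bound[OF C F(1) A(1)] A(3) by (simp add: h_def)
      have "boundary A F \<subseteq> boundary S' F" by (auto simp: boundary_def S'_def)
      moreover have "finite (boundary S' F)"
        by (rule finite_subset[of _ "F \<times> S'"]) (auto simp: boundary_def F finS')
      ultimately have "card (boundary A F) \<le> card (boundary S' F)" by (rule card_mono[rotated])
      moreover have "intc A F + card (boundary A F) = card F * card A"
        by (rule intc_boundary[OF A(1) F(1)])
      ultimately have "card F * card A \<le> intc A F + card (boundary S' F)" by linarith
      hence "real (card F * card A) \<le> real (intc A F + card (boundary S' F))" by (simp only: of_nat_le_iff)
      hence "real (card F) * real (card A) \<le> real (intc A F) + real (card (boundary S' F))" by simp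
      moreover have "real (intc A F) \<le> 4 * C * real (card F) / t"
        using tP t by (simp add: field_simps)
      ultimately have "real (card F) * (real (card A) - 4 * C / t) \<le> real (card (boundary S' F))"
        by (simp add: algebra_simps)
      thus "real (card A) - 4 * C / t \<le> real (card (boundary S' F)) / real (card F)"
        using cF by (simp add: field_simps)
    qed
    have cAS: "card A \<le> card S'" using finS' by (intro card_mono) (auto simp: S'_def)
    have cS': "real (card S') \<le> real (card A) + real (card S0)"
      using card_Un_le[of A S0] unfolding S'_def by linarith
    have "real (card A) powr (1 - \<theta>) \<le> K / t"
    proof (cases "card S' \<ge> 2")
      case True
      have pos: "real (card S') > 0" using True by simp
      have "real (card A) powr (1 - \<theta>) \<le> real (card S') powr (1 - \<theta>)"
        using cAS th by (intro powr_mono2) auto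
      also have "\<dots> = real (card S') * real (card S') powr (-\<theta>)"
      proof -
        have "real (card S') powr (1 - \<theta>) = real (card S') powr 1 * real (card S') powr (-\<theta>)"
          by (metis diff_conv_add_uminus powr_add)
        thus ?thesis using pos by simp
      qed
      also have "\<dots> \<le> real (card S') * e_const S'"
        using H S'FS True pos by (intro mult_left_mono) (auto simp: S'_def)
      also have "\<dots> = real (card S') - cheeger S'" using e_const_card[of S'] pos by simp
      also have "\<dots> \<le> real (card S0) + 4 * C / t" using ch cS' by linarith
      also have "\<dots> \<le> K / t"
      proof -
        have "t * real (card S0) \<le> real (card S0)" by (rule mult_left_le_one_le) (use t in auto)
        hence "real (card S0) \<le> real (card S0) / t" using t by (simp add: field_simps)
        moreover have "K / t = real (card S0) / t + 4 * C / t + 1 / t" unfolding K_def by (simp add: add_divide_distrib)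
        moreover have "1 / t \<ge> 0" using t by simp
        ultimately show ?thesis by linarith
      qed
      finally show ?thesis .
    next
      case False
      hence "card A \<le> 1" using cAS by linarith
      hence "card A = 0 \<or> card A = 1" by linarith
      hence "real (card A) powr (1 - \<theta>) \<le> 1" by auto
      also have "1 \<le> K / t" using t C0 by (simp add: K_def field_simps)
      finally show ?thesis .
    qed
    hence "(real (card A) powr (1 - \<theta>)) powr q \<le> (K / t) powr q"
      using q by (intro powr_mono2) auto
    moreover have "(real (card A) powr (1 - \<theta>)) powr q = real (card A)"
      using th by (cases "card A = 0") (auto simp: powr_powr q_def)
    ultimately show ?thesis by simp
  qed
  have hsym: "h (-z) = h z" for z by (simp add: h_def)
  show ?thesis
  proof (intro exI[of _ K] conjI allI impI K)
    fix t :: real assume t: "0 < t" "t \<le> 1"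
    have fb: "real (card B) \<le> (K / t) powr q" if "finite B" "B \<subseteq> {z. t \<le> h z}" for B
    proof -
      define A where "A = B \<union> uminus ` B"
      have "real (card A) \<le> (K / t) powr q"
        using that hsym by (intro symb t) (auto simp: A_def)
      moreover have "card B \<le> card A" using that by (intro card_mono) (auto simp: A_def)
      ultimately show ?thesis by linarith
    qed
    have fin: "finite {z. t \<le> h z}"
    proof (rule ccontr)
      assume "infinite {z. t \<le> h z}"
      then obtain B where "B \<subseteq> {z. t \<le> h z}" "finite B" "card B = nat \<lceil>(K / t) powr q\<rceil> + 1"
        using infinite_arbitrarily_large by blast
      hence "real (card B) \<le> (K / t) powr q" using fb by blast
      moreover have "(K / t) powr q \<le> real (nat \<lceil>(K / t) powr q\<rceil>)" by (rule real_nat_ceiling_ge)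
      ultimately show False using \<open>card B = nat \<lceil>(K / t) powr q\<rceil> + 1\<close> le_of_int_ceiling[of "(K / t) powr q"] by simp
    qed
    show "finite {z. t \<le> norm (f z) + norm (f (-z))}" using fin by (simp add: h_def)
    show "real (card {z. t \<le> norm (f z) + norm (f (-z))}) \<le> (K / t) powr (1 / (1 - \<theta>))"
      using fb[OF fin] by (simp add: h_def q_def)
  qed
qed

lemma D1_main:
  assumes th: "0 \<le> \<theta>" "\<theta> < 1" and p: "p * (1 - \<theta>) > 1"
    and S0: "S0 \<in> fin_sym_subsets TYPE('a::group_add)"
    and H: "\<forall>S'\<in>fin_sym_subsets TYPE('a). S0 \<subseteq> S' \<longrightarrow> card S' \<ge> 2 \<longrightarrow> e_const S' \<ge> real (card S') powr (-\<theta>)"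
  shows "T1 TYPE('a) \<subseteq> lp_space p"
proof
  fix f :: "'a \<Rightarrow> complex" assume fT: "f \<in> T1 TYPE('a)"
  obtain K where K: "K > 0" and lv: "\<And>t. 0 < t \<Longrightarrow> t \<le> 1 \<Longrightarrow> finite {z. norm (f z) + norm (f (-z)) \<ge> t}
            \<and> real (card {z. norm (f z) + norm (f (-z)) \<ge> t}) \<le> (K / t) powr (1 / (1 - \<theta>))"
    using level_bound[OF fT th S0 H] by blast
  have q: "1 / (1 - \<theta>) > 0" "p > 1 / (1 - \<theta>)" using th p by (auto simp: field_simps)
  have p0: "p \<ge> 0" using q by linarith
  have "(\<lambda>z. (norm (f z) + norm (f (-z))) powr p) summable_on UNIV"
    by (rule weak_to_strong[OF _ q K lv]) auto
  moreover have "norm (f z) powr p \<le> (norm (f z) + norm (f (-z))) powr p" for z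
    using p0 by (intro powr_mono2) auto
  ultimately have "(\<lambda>z. norm (f z) powr p) summable_on UNIV"
    by (rule summable_on_comparison_test) auto
  thus "f \<in> lp_space p" by (simp add: lp_space_def)
qed



definition rr :: "'a::group_add set \<Rightarrow> real" where
  "rr S = ln (e_const S) / ln (real (card S))"

lemma rr_small: "finite S \<Longrightarrow> card S \<le> 1 \<Longrightarrow> rr S = 0"
proof -
  assume "finite S" "card S \<le> 1"
  hence "card S = 0 \<or> card S = 1" by linarith
  thus "rr S = 0"
  proof
    assume "card S = 0"
    hence "e_const S = 1" by (simp add: e_const_def)
    thus ?thesis by (simp add: rr_def)
  qed (simp add: rr_def)
qed

lemma e_pos: "S \<in> fin_sym_subsets TYPE('a::group_add) \<Longrightarrow> S \<noteq> {} \<Longrightarrow> e_const S > 0"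
  using e_ge[of S] by (auto simp: fin_sym_subsets_def card_gt_0_iff intro: less_le_trans[rotated])

lemma rr_range: "S \<in> fin_sym_subsets TYPE('a::group_add) \<Longrightarrow> -1 \<le> rr S \<and> rr S \<le> 0"
proof -
  assume S: "S \<in> fin_sym_subsets TYPE('a)"
  hence fin: "finite S" by (simp add: fin_sym_subsets_def)
  show ?thesis
  proof (cases "card S \<ge> 2")
    case False thus ?thesis using rr_small[OF fin] by simp
  next
    case True
    have ne: "S \<noteq> {}" using True by auto
    have lc: "ln (real (card S)) > 0" using True by simp
    have ep: "e_const S > 0" using e_pos[OF S ne] .
    have "ln (e_const S) \<le> 0" using ep e_le1[of S] by simp
    moreover have "ln (e_const S) \<ge> - ln (real (card S))"
    proof -
      have "1 / real (card S) \<le> e_const S" using e_ge[of S] S ne by (simp add: fin_sym_subsets_def)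
      hence "ln (1 / real (card S)) \<le> ln (e_const S)" using True ep by (subst ln_le_cancel_iff) auto
      thus ?thesis using True by (simp add: ln_div)
    qed
    ultimately show ?thesis using lc by (simp add: rr_def field_simps)
  qed
qed

lemma Lit_ge:
  assumes "\<And>p. p > 0 \<Longrightarrow> T1 TYPE('a::group_add) \<subseteq> lp_space p \<Longrightarrow> q \<le> p"
  shows "ereal q \<le> Lit TYPE('a)"
  unfolding Lit_def using assms by (auto intro!: Inf_greatest)

lemma Lit_le:
  assumes "\<And>p. p > q \<Longrightarrow> p > 0 \<and> T1 TYPE('a::group_add) \<subseteq> lp_space p"
  shows "Lit TYPE('a) \<le> ereal q"
proof (rule ereal_le_epsilon2)
  fix e :: real assume "e > 0"
  hence "q + e > 0 \<and> T1 TYPE('a) \<subseteq> lp_space (q + e)" using assms by simp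
  hence "Lit TYPE('a) \<le> ereal (q + e)" unfolding Lit_def by (auto intro!: Inf_lower)
  thus "Lit TYPE('a) \<le> ereal q + ereal e" by simp
qed

lemma final_calc:
  fixes \<eta> :: real and L :: ereal
  assumes "0 \<le> \<eta>" "\<eta> \<le> 1" and L1: "L \<ge> 1"
    and low: "\<And>\<theta>. 0 \<le> \<theta> \<Longrightarrow> \<theta> < \<eta> \<Longrightarrow> ereal (1/(1-\<theta>)) \<le> L"
    and up: "\<And>\<theta>. \<eta> < \<theta> \<Longrightarrow> \<theta> < 1 \<Longrightarrow> L \<le> ereal (1/(1-\<theta>))"
  shows "ereal \<eta> = 1 - 1 / L"
proof (cases L)
  case PInf
  have "\<eta> = 1"
  proof (rule ccontr)
    assume "\<eta> \<noteq> 1"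
    hence "\<eta> < 1" using assms by simp
    hence "L \<le> ereal (1/(1-(\<eta>+1)/2))" by (intro up) auto
    thus False using PInf by simp
  qed
  thus ?thesis using PInf by (simp add: divide_ereal_def)
next
  case MInf thus ?thesis using L1 by simp
next
  case (real l)
  have l1: "l \<ge> 1" using L1 real by (simp add: one_ereal_def)
  define m where "m = 1 - 1/l"
  have m: "0 \<le> m" "m < 1" using l1 by (auto simp: m_def)
  have lm: "l = 1/(1-m)" using l1 by (simp add: m_def)
  have "\<eta> = m"
  proof (rule ccontr)
    assume "\<eta> \<noteq> m"
    hence "\<eta> < m \<or> m < \<eta>" by linarith
    thus False
    proof
      assume a: "\<eta> < m"
      define \<theta> where "\<theta> = (\<eta> + m)/2"
      have "\<eta> < \<theta>" "\<theta> < 1" "\<theta> < m" using a m by (auto simp: \<theta>_def)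
      hence "l \<le> 1/(1-\<theta>)" using up[of \<theta>] real by simp
      moreover have "1/(1-\<theta>) < 1/(1-m)" using \<open>\<theta> < m\<close> m by (intro divide_strict_left_mono) auto
      ultimately show False using lm by simp
    next
      assume a: "m < \<eta>"
      define \<theta> where "\<theta> = (\<eta> + m)/2"
      have "0 \<le> \<theta>" "\<theta> < \<eta>" "m < \<theta>" using a m by (auto simp: \<theta>_def)
      hence "1/(1-\<theta>) \<le> l" using low[of \<theta>] real by simp
      moreover have "1/(1-m) < 1/(1-\<theta>)" using \<open>m < \<theta>\<close> \<open>\<theta> < \<eta>\<close> assms(2) by (intro divide_strict_left_mono) auto
      ultimately show False using lm by simp
    qed
  qed
  thus ?thesis using real l1 by (simp add: one_ereal_def m_def)
qed



lemma rr_cmp: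
  assumes S: "S \<in> fin_sym_subsets TYPE('a::group_add)" and c: "card S \<ge> 2"
  shows "rr S < a \<longleftrightarrow> e_const S < real (card S) powr a"
    and "a < rr S \<longleftrightarrow> real (card S) powr a < e_const S"
proof -
  have ne: "S \<noteq> {}" using c by auto
  have ep: "e_const S > 0" using e_pos[OF S ne] .
  have lc: "ln (real (card S)) > 0" using c by simp
  have cp: "real (card S) > 0" using c by simp
  have ln1: "ln (real (card S) powr a) = a * ln (real (card S))" using cp by (simp add: ln_powr)
  have pp: "real (card S) powr a > 0" using cp by simp
  show "rr S < a \<longleftrightarrow> e_const S < real (card S) powr a"
  proof -
    have "rr S < a \<longleftrightarrow> ln (e_const S) < a * ln (real (card S))"
      using lc by (simp add: rr_def divide_less_eq)
    also have "\<dots> \<longleftrightarrow> ln (e_const S) < ln (real (card S) powr a)" using ln1 by simp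
    also have "\<dots> \<longleftrightarrow> e_const S < real (card S) powr a" using ep pp by (rule ln_less_cancel_iff)
    finally show ?thesis .
  qed
  show "a < rr S \<longleftrightarrow> real (card S) powr a < e_const S"
  proof -
    have "a < rr S \<longleftrightarrow> a * ln (real (card S)) < ln (e_const S)"
      using lc by (simp add: rr_def less_divide_eq)
    also have "\<dots> \<longleftrightarrow> ln (real (card S) powr a) < ln (e_const S)" using ln1 by simp
    also have "\<dots> \<longleftrightarrow> real (card S) powr a < e_const S" using pp ep by (rule ln_less_cancel_iff)
    finally show ?thesis .
  qed
qed

theorem theorem1p4:
  shows "eta TYPE('a::group_add) = 1 - 1 / Lit TYPE('a)"
proof (cases "finite (UNIV::'a set)")
  case True
  have e: "eta TYPE('a) = -\<infinity>" using True by (simp add: eta_def)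
  have "Lit TYPE('a) \<le> ereal 0"
    by (rule Lit_le) (auto simp: lp_space_def True intro: summable_on_finite)
  moreover have "ereal 0 \<le> Lit TYPE('a)" by (rule Lit_ge) simp
  ultimately have "Lit TYPE('a) = 0" by (simp add: zero_ereal_def)
  thus ?thesis using e by (simp add: divide_ereal_def one_ereal_def)
next
  case False
  define FS where "FS = fin_sym_subsets TYPE('a)"
  define L where "L = (SUP S\<in>FS. INF S'\<in>{S'\<in>FS. S \<subseteq> S'}. ereal (rr S'))"
  have eL: "eta TYPE('a) = - L" using False by (simp add: eta_def L_def FS_def rr_def)
  have emp: "{} \<in> FS" by (simp add: FS_def fin_sym_subsets_def)
  have L0: "L \<le> 0" unfolding L_def
  proof (rule SUP_least)
    fix S assume S: "S \<in> FS"
    have "(INF S'\<in>{S'\<in>FS. S \<subseteq> S'}. ereal (rr S')) \<le> ereal (rr S)" using S by (intro INF_lower) auto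
    also have "\<dots> \<le> 0" using rr_range[of S] S by (simp add: FS_def)
    finally show "(INF S'\<in>{S'\<in>FS. S \<subseteq> S'}. ereal (rr S')) \<le> 0" .
  qed
  have L1: "-1 \<le> L" unfolding L_def
  proof (rule SUP_upper2[OF emp])
    show "-1 \<le> (INF S'\<in>{S'\<in>FS. {} \<subseteq> S'}. ereal (rr S'))"
    proof (rule INF_greatest)
      fix S' assume "S' \<in> {S'\<in>FS. {} \<subseteq> S'}"
      hence "-1 \<le> rr S'" using rr_range[of S'] by (simp add: FS_def)
      thus "-1 \<le> ereal (rr S')" by (simp add: one_ereal_def)
    qed
  qed
  obtain l where l: "L = ereal l" using L0 L1 by (cases L) auto
  define \<eta> where "\<eta> = - l"
  have \<eta>: "0 \<le> \<eta>" "\<eta> \<le> 1" using L0 L1 l by (auto simp: \<eta>_def one_ereal_def)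
  have Lit1: "Lit TYPE('a) \<ge> 1"
  proof -
    have "ereal 1 \<le> Lit TYPE('a)"
    proof (rule Lit_ge)
      fix p :: real assume p: "p > 0" "T1 TYPE('a) \<subseteq> lp_space p"
      show "1 \<le> p"
      proof (rule ccontr)
        assume "\<not> 1 \<le> p"
        hence pt0: "p * (1 - 0) < 1" by simp
        have H0: "\<forall>S0\<in>fin_sym_subsets TYPE('a). \<exists>S'\<in>fin_sym_subsets TYPE('a). S0 \<subseteq> S' \<and> e_const S' \<le> real (card S') powr (-0)"
        proof
          fix S0 assume S0: "S0 \<in> fin_sym_subsets TYPE('a)"
          define S' where "S' = insert 0 S0"
          have "S' \<in> fin_sym_subsets TYPE('a)" using S0 by (auto simp: S'_def fin_sym_subsets_def)
          moreover have "card S' > 0" using S0 by (auto simp: S'_def fin_sym_subsets_def card_gt_0_iff)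
          ultimately show "\<exists>S'\<in>fin_sym_subsets TYPE('a). S0 \<subseteq> S' \<and> e_const S' \<le> real (card S') powr (-0)"
            using e_le1[of S'] by (intro bexI[of _ S']) (auto simp: S'_def)
        qed
        show False using D2_main[OF False order_refl zero_less_one p(1) pt0 H0] p(2) by blast
      qed
    qed
    thus ?thesis by (simp add: one_ereal_def)
  qed
  have low: "ereal (1/(1-\<theta>)) \<le> Lit TYPE('a)" if th: "0 \<le> \<theta>" "\<theta> < \<eta>" for \<theta>
  proof (rule Lit_ge)
    fix p :: real assume p: "p > 0" "T1 TYPE('a) \<subseteq> lp_space p"
    have th1: "\<theta> < 1" using th \<eta> by simp
    show "1/(1-\<theta>) \<le> p"
    proof (rule ccontr)
      assume "\<not> 1/(1-\<theta>) \<le> p"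
      hence pt: "p * (1 - \<theta>) < 1" using th1 by (simp add: field_simps)
      have "\<forall>S0\<in>fin_sym_subsets TYPE('a). \<exists>S'\<in>fin_sym_subsets TYPE('a). S0 \<subseteq> S' \<and> e_const S' \<le> real (card S') powr (-\<theta>)"
      proof
        fix S0 assume S0: "S0 \<in> fin_sym_subsets TYPE('a)"
        have "(INF S'\<in>{S'\<in>FS. S0 \<subseteq> S'}. ereal (rr S')) \<le> L"
          unfolding L_def using S0 by (intro SUP_upper) (simp add: FS_def)
        also have "L < ereal (-\<theta>)" using l th by (simp add: \<eta>_def)
        finally obtain S' where S': "S' \<in> FS" "S0 \<subseteq> S'" "ereal (rr S') < ereal (-\<theta>)"
          by (auto simp: INF_less_iff)
        have r: "rr S' < -\<theta>" using S'(3) by simp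
        have c2: "card S' \<ge> 2"
        proof (rule ccontr)
          assume "\<not> card S' \<ge> 2"
          hence "card S' \<le> 1" by linarith
          hence "rr S' = 0" using S' rr_small[of S'] by (auto simp: FS_def fin_sym_subsets_def)
          thus False using r th by simp
        qed
        have "e_const S' < real (card S') powr (-\<theta>)"
          using rr_cmp(1)[of S' "-\<theta>"] S' c2 r by (simp add: FS_def)
        thus "\<exists>S'\<in>fin_sym_subsets TYPE('a). S0 \<subseteq> S' \<and> e_const S' \<le> real (card S') powr (-\<theta>)"
          using S' by (auto simp: FS_def intro!: bexI[of _ S'])
      qed
      thus False using D2_main[OF False th(1) th1 p(1) pt] p(2) by blast
    qed
  qed
  have up: "Lit TYPE('a) \<le> ereal (1/(1-\<theta>))" if th: "\<eta> < \<theta>" "\<theta> < 1" for \<theta>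
  proof (rule Lit_le)
    fix p :: real assume p: "p > 1/(1-\<theta>)"
    have th0: "0 \<le> \<theta>" using th \<eta> by simp
    have pt: "p * (1 - \<theta>) > 1" using p th by (simp add: field_simps)
    have "ereal (-\<theta>) < L" using l th by (simp add: \<eta>_def)
    then obtain S0 where S0: "S0 \<in> FS" and Sl: "ereal (-\<theta>) < (INF S'\<in>{S'\<in>FS. S0 \<subseteq> S'}. ereal (rr S'))"
      unfolding L_def by (auto simp: less_SUP_iff)
    have H: "\<forall>S'\<in>fin_sym_subsets TYPE('a). S0 \<subseteq> S' \<longrightarrow> card S' \<ge> 2 \<longrightarrow> e_const S' \<ge> real (card S') powr (-\<theta>)"
    proof (intro ballI impI)
      fix S' assume S': "S' \<in> fin_sym_subsets TYPE('a)" "S0 \<subseteq> S'" "card S' \<ge> 2"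
      have "(INF S'\<in>{S'\<in>FS. S0 \<subseteq> S'}. ereal (rr S')) \<le> ereal (rr S')"
        using S' by (intro INF_lower) (simp add: FS_def)
      hence "ereal (-\<theta>) < ereal (rr S')" using Sl by (rule order.strict_trans2[rotated])
      hence "-\<theta> < rr S'" by simp
      hence "real (card S') powr (-\<theta>) < e_const S'" using rr_cmp(2)[OF S'(1) S'(3)] by simp
      thus "e_const S' \<ge> real (card S') powr (-\<theta>)" by simp
    qed
    have "T1 TYPE('a) \<subseteq> lp_space p"
      using D1_main[OF th0 th(2) pt _ H] S0 by (simp add: FS_def)
    moreover have "p > 0" using p th by (smt (verit) divide_pos_pos)
    ultimately show "p > 0 \<and> T1 TYPE('a) \<subseteq> lp_space p" by simp
  qed
  have "ereal \<eta> = 1 - 1 / Lit TYPE('a)"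
    by (rule final_calc[OF \<eta> Lit1 low up])
  thus ?thesis using eL l by (simp add: \<eta>_def)
qed


end
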